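(* Let $x,y\in\mathbb{R}[X]$ with $\deg x=\deg y=2$, and let $\gamma\in\mathbb{R}[X]$ be a polynomial without real roots such that $p=x/\gamma$ and $q=y/\gamma$ lie in $D$. If $\gcd(x,y)$ is not a constant, then $\begin{pmatrix} p & q\\ 0 & 0\end{pmatrix}$ is a product of idempotent $2\times 2$ matrices over $D$.
   Context: $D$ denotes the minimal Dress ring of the field $\mathbb{R}(X)$, i.e. the subring of $\mathbb{R}(X)$ generated by $\mathbb{Z}$ and all elements $1/(1+h^2)$ with $h\in\mathbb{R}(X)$. A matrix $E$ is idempotent if $E^2=E$. *)

theory Defs
  imports "HOL-Analysis.Analysis" "HOL-Computational_Algebra.Polynomial_Factorial" "HOL-Computational_Algebra.Field_as_Ring"
    "HOL-Computational_Algebra.Fraction_Field"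
begin

text \<open>The field R(X) is rendered as real poly fract.
  The minimal Dress ring D: the subring generated by the integers and all
  elements 1/(1+h^2), h in R(X).\<close>

inductive_set dress_min :: "real poly fract set" where
  of_int: "of_int n \<in> dress_min"
| inv_sq: "inverse (1 + h ^ 2) \<in> dress_min"
| add: "a \<in> dress_min \<Longrightarrow> b \<in> dress_min \<Longrightarrow> a + b \<in> dress_min"
| neg: "a \<in> dress_min \<Longrightarrow> - a \<in> dress_min"
| mult: "a \<in> dress_min \<Longrightarrow> b \<in> dress_min \<Longrightarrow> a * b \<in> dress_min"

definition mat2 :: "'a::zero \<Rightarrow> 'a \<Rightarrow> 'a \<Rightarrow> 'a \<Rightarrow> 'a ^ 2 ^ 2" where
  "mat2 a b c d = (\<chi> i j. if i = 1 then (if j = 1 then a else b)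
                          else (if j = 1 then c else d))"

definition matrix_over :: "'a set \<Rightarrow> 'a ^ 2 ^ 2 \<Rightarrow> bool" where
  "matrix_over S E \<longleftrightarrow> (\<forall>i j. E $ i $ j \<in> S)"

definition idempotent_mat :: "'a::semiring_1 ^ 2 ^ 2 \<Rightarrow> bool" where
  "idempotent_mat E \<longleftrightarrow> E ** E = E"

definition product_of_idempotents_over :: "'a::semiring_1 set \<Rightarrow> 'a ^ 2 ^ 2 \<Rightarrow> bool" where
  "product_of_idempotents_over S M \<longleftrightarrow>
     (\<exists>Es. Es \<noteq> [] \<and> (\<forall>E \<in> set Es. matrix_over S E \<and> idempotent_mat E)
           \<and> M = foldr (**) Es (mat 1))"

end

theory Submission
  imports Defs "HOL-Computational_Algebra.Fundamental_Theorem_Algebra"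
begin


abbreviation C :: "real \<Rightarrow> real poly fract" where "C r \<equiv> to_fract [:r:]"
abbreviation Xf :: "real poly fract" where "Xf \<equiv> to_fract [:0,1:]"

lemma C_add: "C (r + s) = C r + C s"
proof - have h: "[:r + s:] = [:r:] + [:s:]" by simp show ?thesis by (subst h) (rule to_fract_add) qed
lemma C_mult: "C (r * s) = C r * C s"
proof - have h: "[:r * s:] = [:r:] * [:s:]" by simp show ?thesis by (subst h) (rule to_fract_mult) qed
lemma C_minus: "C (- r) = - C r"
proof - have h: "[:- r:] = - [:r:]" by simp show ?thesis by (subst h) (rule to_fract_uminus) qed
lemma C_diff: "C (r - s) = C r - C s"
  using C_add[of r "-s"] C_minus[of s] by simp
lemma C_0: "C 0 = 0" by simp
lemma C_1: "C 1 = 1" by (simp add: one_pCons[symmetric])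
lemma C_eq0: "C r = 0 \<longleftrightarrow> r = 0" by simp
lemma C_inverse: "C (inverse r) = inverse (C r)"
proof (cases "r = 0")
  case True then show ?thesis by simp
next
  case False
  have "C (inverse r) * C r = 1" using False by (simp flip: C_mult add: C_1)
  then show ?thesis using False by (simp add: field_simps)
qed
lemma C_divide: "C (r / s) = C r / C s"
  by (simp add: divide_inverse C_mult C_inverse)
lemma C_power: "C (r ^ n) = C r ^ n"
  by (induct n) (simp_all add: C_1 C_mult)
lemma C_of_nat: "C (of_nat n) = of_nat n"
  by (induct n) (simp_all add: C_add C_1)
lemma C_numeral: "C (numeral n) = numeral n"
  using C_of_nat[of "numeral n"] by simp

lemmas C_simps = C_add C_mult C_minus C_diff C_1 C_inverse C_divide C_power C_numeral

lemma D_0: "0 \<in> dress_min" using dress_min.of_int[of 0] by simp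
lemma D_1: "1 \<in> dress_min" using dress_min.of_int[of 1] by simp
lemma D_diff: "a \<in> dress_min \<Longrightarrow> b \<in> dress_min \<Longrightarrow> a - b \<in> dress_min"
  using dress_min.add[of a "-b"] dress_min.neg[of b] by simp
lemma D_of_nat: "of_nat n \<in> dress_min" using dress_min.of_int[of "int n"] by simp

lemma D_C: "C r \<in> dress_min"
proof -
  have pos: "C r \<in> dress_min" if "r > 0" for r
  proof -
    define n where "n = nat \<lceil>r\<rceil> + 1"
    have rn: "r < real n" unfolding n_def by linarith
    define s where "s = r / real n"
    have s0: "0 < s" "s < 1" using that rn unfolding s_def by (auto simp: field_simps)
    define t where "t = sqrt (1 / s - 1)"
    have "t^2 = 1/s - 1" unfolding t_def using s0 by (simp add: field_simps)
    hence "1 + t^2 = 1/s" by simp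
    hence st: "inverse (1 + t^2) = s" by simp
    have "inverse (1 + (C t)^2) \<in> dress_min" by (rule dress_min.inv_sq)
    also have "inverse (1 + (C t)^2) = C s"
      by (simp flip: st add: C_simps)
    finally have "C s \<in> dress_min" .
    moreover have "r = real n * s" unfolding s_def using rn that by auto
    ultimately show ?thesis using dress_min.mult[OF D_of_nat[of n]] by (simp add: C_mult C_of_nat)
  qed
  show ?thesis
  proof (cases "r > 0")
    case True then show ?thesis by (rule pos)
  next
    case False
    show ?thesis
    proof (cases "r = 0")
      case True then show ?thesis using D_0 by simp
    next
      case F2: False
      with False have "-r > 0" by simp
      from dress_min.neg[OF pos[OF this]] show ?thesis by (simp add: C_minus)
    qed
  qed
qed

lemma D_Cmult: "a \<in> dress_min \<Longrightarrow> C r * a \<in> dress_min"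
  by (rule dress_min.mult[OF D_C])




definition bnd :: "real poly fract \<Rightarrow> bool" where
 "bnd f \<longleftrightarrow> (\<exists>n d. d \<noteq> 0 \<and> f = Fract n d \<and> degree n \<le> degree d)"

lemma sq_coeff:
  fixes p :: "real poly"
  assumes "degree p \<le> k"
  shows "coeff (p*p) (2*k) = (if degree p = k then (lead_coeff p)^2 else 0)"
proof (cases "degree p = k")
  case True
  then show ?thesis using coeff_mult_degree_sum[of p p] by (simp add: power2_eq_square mult_2)
next
  case False
  have "degree (p*p) < 2*k"
    using degree_mult_le[of p p] False assms by linarith
  then show ?thesis using False by (simp add: coeff_eq_0)
qed

lemma sos_degree:
  fixes d n :: "real poly"
  assumes "d \<noteq> 0"
  shows "d*d + n*n \<noteq> 0 \<and> degree (d*d) \<le> degree (d*d + n*n)"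
proof -
  define k where "k = max (degree d) (degree n)"
  have c: "coeff (d*d + n*n) (2*k) = (if degree d = k then (lead_coeff d)^2 else 0)
     + (if degree n = k then (lead_coeff n)^2 else 0)"
    using sq_coeff[of d k] sq_coeff[of n k] unfolding k_def by simp
  have pos: "coeff (d*d + n*n) (2*k) > 0"
  proof (cases "degree d = k")
    case True
    have l: "(lead_coeff d)^2 > 0" using assms by simp
    have nn: "(if degree n = k then (lead_coeff n)^2 else 0) \<ge> 0" by simp
    from c True have "coeff (d*d + n*n) (2*k) = (lead_coeff d)^2 + (if degree n = k then (lead_coeff n)^2 else 0)" by simp
    then show ?thesis using l nn by linarith
  next
    case False
    then have dn: "degree n = k" "degree d < k" unfolding k_def by (simp_all add: max_def split: if_splits)
    then have "n \<noteq> 0" by (cases "n = 0") simp_all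
    have "lead_coeff n \<noteq> 0" using \<open>n \<noteq> 0\<close> by simp
    then show ?thesis using c False dn by simp
  qed
  then have "2*k \<le> degree (d*d + n*n)" by (intro le_degree) simp
  moreover have "degree (d*d) \<le> 2*k" using degree_mult_le[of d d] unfolding k_def by linarith
  ultimately show ?thesis using pos by auto
qed

lemma of_int_fract': "(of_int k :: 'a::idom fract) = Fract (of_int k) 1"
proof (cases "k \<ge> 0")
  case True
  then obtain m where "k = int m" using nonneg_int_cases by blast
  then show ?thesis using of_nat_fract[of m] by simp
next
  case False
  then have "- k \<ge> 0" by simp
  then obtain m where "- k = int m" using nonneg_int_cases by blast
  then have k: "k = - int m" by simp
  have "(of_int k :: 'a fract) = - of_nat m" using k by simp
  also have "\<dots> = - Fract (of_nat m) 1" by (simp only: of_nat_fract)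
  also have "\<dots> = Fract (- of_nat m) 1" by (rule minus_fract)
  also have "\<dots> = Fract (of_int k) 1" using k by simp
  finally show ?thesis .
qed

lemma bnd_D: "f \<in> dress_min \<Longrightarrow> bnd f"
proof (induction rule: dress_min.induct)
  case (of_int n)
  show ?case unfolding bnd_def
    by (rule exI[of _ "of_int n"], rule exI[of _ 1]) (simp add: of_int_fract' of_int_poly)
next
  case (inv_sq h)
  obtain n d where h: "h = Fract n d" "d \<noteq> 0" by (cases h)
  have sd: "d*d + n*n \<noteq> 0" "degree (d*d) \<le> degree (d*d + n*n)" using sos_degree[OF h(2)] by auto
  have "1 + h^2 = Fract 1 1 + Fract (n*n) (d*d)"
    using h by (simp add: power2_eq_square fract_collapse)
  also have "\<dots> = Fract (d*d + n*n) (d*d)" using h(2) by (simp add: add.commute)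
  finally have "1 + h^2 = Fract (d*d + n*n) (d*d)" .
  then have "inverse (1 + h^2) = Fract (d*d) (d*d + n*n)" by simp
  then show ?case unfolding bnd_def using sd by blast
next
  case (add a b)
  from add.IH obtain n1 d1 n2 d2 where
    a: "d1 \<noteq> 0" "a = Fract n1 d1" "degree n1 \<le> degree d1" and
    b: "d2 \<noteq> 0" "b = Fract n2 d2" "degree n2 \<le> degree d2" unfolding bnd_def by blast
  have "a + b = Fract (n1*d2 + n2*d1) (d1*d2)" using a b by simp
  moreover have "degree (n1*d2 + n2*d1) \<le> degree (d1*d2)"
    using degree_add_le_max[of "n1*d2" "n2*d1"] degree_mult_le[of n1 d2] degree_mult_le[of n2 d1]
      degree_mult_eq[OF a(1) b(1)] a(3) b(3) by linarith
  ultimately show ?case unfolding bnd_def using a b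
    by (intro exI[of _ "n1*d2 + n2*d1"] exI[of _ "d1*d2"]) simp
next
  case (neg a)
  from neg.IH obtain n d where a: "d \<noteq> 0" "a = Fract n d" "degree n \<le> degree d" unfolding bnd_def by blast
  then have "- a = Fract (-n) d" by simp
  then show ?case unfolding bnd_def using a
    by (intro exI[of _ "-n"] exI[of _ "d"]) simp
next
  case (mult a b)
  from mult.IH obtain n1 d1 n2 d2 where
    a: "d1 \<noteq> 0" "a = Fract n1 d1" "degree n1 \<le> degree d1" and
    b: "d2 \<noteq> 0" "b = Fract n2 d2" "degree n2 \<le> degree d2" unfolding bnd_def by blast
  have "a * b = Fract (n1*n2) (d1*d2)" using a b by simp
  moreover have "degree (n1*n2) \<le> degree (d1*d2)"
    using degree_mult_le[of n1 n2] degree_mult_eq[OF a(1) b(1)] a(3) b(3) by linarith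
  ultimately show ?case unfolding bnd_def using a b
    by (intro exI[of _ "n1*n2"] exI[of _ "d1*d2"]) simp
qed

lemma D_degree:
  fixes x g :: "real poly"
  assumes "Fract x g \<in> dress_min" "g \<noteq> 0"
  shows "degree x \<le> degree g"
proof (cases "x = 0")
  case True then show ?thesis by simp
next
  case False
  from bnd_D[OF assms(1)] obtain n d where nd: "d \<noteq> 0" "Fract x g = Fract n d" "degree n \<le> degree d"
    unfolding bnd_def by blast
  then have e: "x * d = n * g" using eq_fract(1)[OF assms(2) nd(1)] by blast
  then have "n \<noteq> 0" using False nd(1) by auto
  have "degree (x*d) = degree (n*g)" using e by simp
  then have "degree x + degree d = degree n + degree g"
    by (simp only: degree_mult_eq[OF False nd(1)] degree_mult_eq[OF \<open>n \<noteq> 0\<close> assms(2)])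
  then show ?thesis using nd(3) by linarith
qed




lemma to_fract_lin: "to_fract [:- m, 1:] = Xf - C m"
proof -
  have h: "[:- m, 1:] = [:0,1:] - [:m:]" by simp
  show ?thesis by (subst h) (rule to_fract_diff)
qed

lemma to_fract_quad: "to_fract [:c0, c1, c2:] = C c0 + C c1 * Xf + C c2 * Xf^2"
proof -
  have h: "[:c0, c1, c2:] = [:c0:] + [:c1:] * [:0,1:] + [:c2:] * [:0,1:]^2"
    by (simp add: power2_eq_square)
  show ?thesis by (subst h) (simp only: to_fract_add to_fract_mult power2_eq_square)
qed

lemma deg2_coeffs: "degree (f::real poly) \<le> 2 \<Longrightarrow> f = [:coeff f 0, coeff f 1, coeff f 2:]"
  by (rule poly_eqI) (auto simp: coeff_pCons coeff_eq_0 numeral_2_eq_2 split: nat.split)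

lemma two_ne0: "(2::real poly fract) \<noteq> 0"
  using C_numeral[of "num.Bit0 num.One"] C_eq0[of 2] by simp

lemma quad_basis:
  fixes \<mu> \<nu> :: real
  assumes "\<nu> \<noteq> 0"
  defines "T \<equiv> Xf - C \<mu>"
  defines "G \<equiv> T^2 + C \<nu> ^2"
  shows "G \<noteq> 0" "1 / G \<in> dress_min" "T / G \<in> dress_min" "T^2 / G \<in> dress_min"
proof -
  have "to_fract ([:- \<mu>, 1:]^2 + [:\<nu>^2:]) = (to_fract [:- \<mu>, 1:])^2 + C (\<nu>^2)"
    by (simp only: to_fract_add to_fract_mult power2_eq_square)
  then have GP: "G = to_fract ([:- \<mu>, 1:]^2 + [:\<nu>^2:])"
    unfolding G_def T_def by (simp only: to_fract_lin C_power)
  have "poly ([:- \<mu>, 1:]^2 + [:\<nu>^2:]) \<mu> \<noteq> 0" using assms(1) by simp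
  then have "[:- \<mu>, 1:]^2 + [:\<nu>^2:] \<noteq> 0"
  proof (rule contrapos_nn)
    assume "[:- \<mu>, 1:]^2 + [:\<nu>^2:] = 0"
    then show "poly ([:- \<mu>, 1:]^2 + [:\<nu>^2:]) \<mu> = 0" by (simp only: poly_0)
  qed
  then show G0: "G \<noteq> 0" by (simp only: GP to_fract_eq_0_iff not_False_eq_True)
  have nu0: "C \<nu> \<noteq> 0" using assms(1) by simp
  define t where "t = T / C \<nu>"
  have one_t2: "1 + t^2 = G / (C \<nu>)^2" unfolding t_def G_def using nu0 by (simp add: field_simps)
  have B0: "inverse (1 + t^2) \<in> dress_min" by (rule dress_min.inv_sq)
  have ie: "inverse (1 + t^2) = (C \<nu>)^2 / G" using one_t2 by simp
  have "C (inverse (\<nu>^2)) * inverse (1 + t^2) = 1 / G" unfolding ie using nu0 G0 by (simp add: C_simps field_simps)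
  then show D0: "1 / G \<in> dress_min" using D_Cmult[OF B0] by metis
  have tp: "1 + t \<noteq> 0"
  proof
    assume "1 + t = 0"
    then have "C \<nu> + T = 0" unfolding t_def using nu0 by (simp add: field_simps)
    then have "to_fract [:- (\<mu> - \<nu>), 1:] = 0" unfolding T_def to_fract_lin by (simp add: C_simps algebra_simps)
    then show False by simp
  qed
  have tq: "1 + t^2 \<noteq> 0" using one_t2 G0 nu0 by simp
  define h where "h = (1 - t) / (1 + t)"
  have tp2: "(1+t)^2 \<noteq> 0" using tp by simp
  have "1 + h^2 = ((1+t)^2 + (1-t)^2) / (1+t)^2" unfolding h_def using tp2
    by (simp add: power_divide field_simps)
  also have "(1+t)^2 + (1-t)^2 = 2 * (1 + t^2)" by (simp add: power2_eq_square algebra_simps)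
  finally have "1 + h^2 = 2 * (1 + t^2) / (1 + t)^2" .
  then have "inverse (1 + h^2) = (1 + t)^2 / (2 * (1 + t^2))" by simp
  also have "\<dots> = C (1/2) + t / (1 + t^2)" using tp tq two_ne0
    by (simp add: C_simps field_simps power2_eq_square)
  finally have e: "t / (1 + t^2) = inverse (1 + h^2) - C (1/2)" by simp
  have "t / (1 + t^2) \<in> dress_min" unfolding e by (intro D_diff dress_min.inv_sq D_C)
  moreover have "T / G = C (1/\<nu>) * (t / (1 + t^2))" unfolding one_t2 unfolding t_def
    using nu0 G0 by (simp add: C_simps field_simps power2_eq_square)
  ultimately show "T / G \<in> dress_min" using D_Cmult by metis
  have "T^2 / G = 1 - C (\<nu>^2) * (1 / G)" using G0 unfolding G_def by (simp add: C_simps field_simps)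
  then show "T^2 / G \<in> dress_min" using D_diff[OF D_1 D_Cmult[OF D0]] by metis
qed

definition Pd :: "real poly \<Rightarrow> bool" where
  "Pd g \<longleftrightarrow> (\<forall>f. degree f \<le> degree g \<longrightarrow> Fract f g \<in> dress_min)"

lemma q2_facts:
  assumes "\<nu> \<noteq> 0"
  shows "[:- \<mu>, 1:]^2 + [:\<nu>^2:] \<noteq> 0" "degree ([:- \<mu>, 1:]^2 + [:\<nu>^2:]) = 2"
    "to_fract ([:- \<mu>, 1:]^2 + [:\<nu>^2:]) = (Xf - C \<mu>)^2 + C \<nu> ^2"
proof -
  have "poly ([:- \<mu>, 1:]^2 + [:\<nu>^2:]) \<mu> \<noteq> 0" using assms(1) by simp
  then show "[:- \<mu>, 1:]^2 + [:\<nu>^2:] \<noteq> 0"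
  proof (rule contrapos_nn)
    assume "[:- \<mu>, 1:]^2 + [:\<nu>^2:] = 0"
    then show "poly ([:- \<mu>, 1:]^2 + [:\<nu>^2:]) \<mu> = 0" by (simp only: poly_0)
  qed
  have "degree ([:- \<mu>, 1:]^2) = 2" by (subst degree_power_eq) simp_all
  then show "degree ([:- \<mu>, 1:]^2 + [:\<nu>^2:]) = 2" by (subst degree_add_eq_left) simp_all
  have "to_fract ([:- \<mu>, 1:]^2 + [:\<nu>^2:]) = (to_fract [:- \<mu>, 1:])^2 + C (\<nu>^2)"
    by (simp only: to_fract_add to_fract_mult power2_eq_square)
  then show "to_fract ([:- \<mu>, 1:]^2 + [:\<nu>^2:]) = (Xf - C \<mu>)^2 + C \<nu> ^2"
    by (simp only: to_fract_lin C_power)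
qed

lemma Pd_quad:
  assumes "\<nu> \<noteq> 0"
  shows "Pd ([:- \<mu>, 1:]^2 + [:\<nu>^2:])"
  unfolding Pd_def
proof (intro allI impI)
  fix f :: "real poly"
  assume df: "degree f \<le> degree ([:- \<mu>, 1:]^2 + [:\<nu>^2:])"
  note qf = q2_facts[OF assms, of \<mu>]
  define T where "T = Xf - C \<mu>"
  define G where "G = T^2 + C \<nu> ^2"
  have B: "G \<noteq> 0" "1 / G \<in> dress_min" "T / G \<in> dress_min" "T^2 / G \<in> dress_min"
    using quad_basis[OF assms, of \<mu>] unfolding T_def G_def by auto
  have GP: "to_fract ([:- \<mu>, 1:]^2 + [:\<nu>^2:]) = G" using qf(3) unfolding G_def T_def .
  have "degree f \<le> 2" using df qf(2) by simp
  then have fq: "f = [:coeff f 0, coeff f 1, coeff f 2:]" by (rule deg2_coeffs)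
  define a0 where "a0 = coeff f 0 + coeff f 1 * \<mu> + coeff f 2 * \<mu>^2"
  define a1 where "a1 = coeff f 1 + 2 * coeff f 2 * \<mu>"
  define a2 where "a2 = coeff f 2"
  have "to_fract f = C a0 + C a1 * T + C a2 * T^2"
    by (subst fq, unfold to_fract_quad a0_def a1_def a2_def T_def)
       (simp add: C_simps algebra_simps power2_eq_square)
  moreover have "Fract f ([:- \<mu>, 1:]^2 + [:\<nu>^2:]) = to_fract f / G"
    by (simp only: Fract_conv_to_fract GP)
  ultimately have "Fract f ([:- \<mu>, 1:]^2 + [:\<nu>^2:]) = C a0 * (1 / G) + C a1 * (T / G) + C a2 * (T^2 / G)"
    by (simp add: add_divide_distrib)
  also have "\<dots> \<in> dress_min"
    using B by (intro dress_min.add D_Cmult)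
  finally show "Fract f ([:- \<mu>, 1:]^2 + [:\<nu>^2:]) \<in> dress_min" .
qed

lemma Pd_mult:
  assumes "g1 \<noteq> 0" "g2 \<noteq> 0" "Pd g1" "Pd g2"
  shows "Pd (g1 * g2)"
  unfolding Pd_def
proof (intro allI impI)
  fix f :: "real poly"
  assume df: "degree f \<le> degree (g1 * g2)"
  then have df': "degree f \<le> degree g1 + degree g2" using degree_mult_eq[OF assms(1,2)] by simp
  define k where "k = degree g1"
  define fl where "fl = poly_cutoff k f"
  define fh where "fh = poly_shift k f"
  have split: "f = fl + monom 1 k * fh"
    by (rule poly_eqI) (simp add: fl_def fh_def coeff_poly_cutoff coeff_poly_shift coeff_monom_mult)
  have dl: "degree fl \<le> degree g1"
    by (rule degree_le) (simp add: fl_def coeff_poly_cutoff k_def)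
  have dh: "degree fh \<le> degree g2"
  proof (rule degree_le, intro allI impI)
    fix i assume "degree g2 < i"
    then have "degree f < i + k" using df' unfolding k_def by linarith
    then show "coeff fh i = 0" unfolding fh_def coeff_poly_shift by (rule coeff_eq_0)
  qed
  have dm: "degree (monom (1::real) k) \<le> degree g1" by (simp add: degree_monom_eq k_def)
  have d1: "degree (1::real poly) \<le> degree g2" by simp
  have "Fract f (g1*g2) = Fract fl g1 * Fract 1 g2 + Fract (monom 1 k) g1 * Fract fh g2"
    using assms(1,2) by (subst split) (simp add: eq_fract algebra_simps)
  also have "\<dots> \<in> dress_min"
    using assms(3,4) dl dh dm d1 unfolding Pd_def by (intro dress_min.add dress_min.mult) auto
  finally show "Fract f (g1 * g2) \<in> dress_min" .
qed

abbreviation cp :: "real poly \<Rightarrow> complex poly" where "cp p \<equiv> map_poly complex_of_real p"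

lemma cp_add: "cp (p + q) = cp p + cp q"
  by (rule poly_eqI) (simp add: coeff_map_poly)
lemma cp_smult: "cp (smult a q) = smult (of_real a) (cp q)"
  by (rule poly_eqI) (simp add: coeff_map_poly)
lemma cp_pCons: "cp (pCons a p) = pCons (of_real a) (cp p)"
  by (rule map_poly_pCons) simp
lemma cp_mult: "cp (p * q) = cp p * cp q"
  by (induct p) (simp_all add: cp_add cp_smult cp_pCons)
lemma cp_real: "poly (cp p) (of_real t) = of_real (poly p t)"
  by (induct p) (simp_all add: cp_pCons)

lemma real_quad_factor:
  fixes g :: "real poly"
  assumes nr: "\<forall>t. poly g t \<noteq> 0" and dg: "degree g > 0"
  shows "\<exists>\<mu> \<nu> s. \<nu> \<noteq> 0 \<and> g = ([:- \<mu>, 1:]^2 + [:\<nu>^2:]) * s"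
proof -
  have "\<not> (\<exists>a l. a \<noteq> 0 \<and> l = 0 \<and> cp g = pCons a l)"
  proof
    assume "\<exists>a l. a \<noteq> 0 \<and> l = 0 \<and> cp g = pCons a l"
    then obtain a where a: "cp g = [:a:]" by blast
    have "coeff (cp g) (degree g) = of_real (lead_coeff g)" by (simp add: coeff_map_poly)
    moreover have "lead_coeff g \<noteq> 0" using dg by auto
    moreover have "coeff (cp g) (degree g) = 0" using a dg by (simp add: coeff_pCons split: nat.split)
    ultimately show False by simp
  qed
  then obtain z where z: "poly (cp g) z = 0" using fundamental_theorem_of_algebra_alt by blast
  define \<mu> where "\<mu> = Re z"
  define \<nu> where "\<nu> = Im z"
  have nu: "\<nu> \<noteq> 0"
  proof
    assume "\<nu> = 0"
    then have "z = of_real \<mu>" unfolding \<mu>_def \<nu>_def by (simp add: complex_eq_iff)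
    then have "poly (cp g) (of_real \<mu>) = 0" using z by simp
    then show False using nr cp_real[of g \<mu>] by simp
  qed
  define q where "q = [:- \<mu>, 1:]^2 + [:\<nu>^2:]"
  note qf = q2_facts[OF nu, of \<mu>, folded q_def]
  define s where "s = g div q"
  define r where "r = g mod q"
  have gsr: "g = s * q + r" unfolding s_def r_def by simp
  have dr: "degree r \<le> 1"
  proof (cases "r = 0")
    case True then show ?thesis by simp
  next
    case False
    then show ?thesis using degree_mod_less[OF qf(1), of g] qf(2) unfolding r_def by auto
  qed
  have "poly (cp q) z = (z - of_real \<mu>)^2 + (of_real \<nu>)^2"
    unfolding q_def by (simp add: cp_add cp_mult power2_eq_square cp_pCons algebra_simps)
  also have "\<dots> = 0" unfolding \<mu>_def \<nu>_def by (simp add: complex_eq_iff power2_eq_square)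
  finally have qz: "poly (cp q) z = 0" .
  have rz: "poly (cp r) z = 0" using z qz by (subst (asm) gsr) (simp add: cp_add cp_mult)
  have rr: "r = [:coeff r 0, coeff r 1:]"
    by (rule poly_eqI) (use dr in \<open>auto simp: coeff_pCons coeff_eq_0 split: nat.split\<close>)
  have "of_real (coeff r 0) + of_real (coeff r 1) * z = 0"
    using rz by (subst (asm) rr) (simp add: cp_pCons mult.commute)
  then have "coeff r 1 * \<nu> = 0" "coeff r 0 + coeff r 1 * \<mu> = 0"
    unfolding \<mu>_def \<nu>_def by (simp_all add: complex_eq_iff)
  then have "coeff r 1 = 0" "coeff r 0 = 0" using nu by auto
  then have "r = 0" using rr by simp
  then have "g = q * s" using gsr by (simp add: mult.commute)
  then show ?thesis using nu unfolding q_def by blast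
qed

lemma H_lemma: "\<forall>t. poly g t \<noteq> 0 \<Longrightarrow> Pd g"
proof (induction "degree g" arbitrary: g rule: less_induct)
  case less
  show ?case
  proof (cases "degree g = 0")
    case True
    have gc: "g = [:coeff g 0:]" by (rule sym[OF degree_0_id[OF True]])
    have c0: "coeff g 0 \<noteq> 0" using less.prems gc by (metis poly_const_conv)
    show ?thesis unfolding Pd_def
    proof (intro allI impI)
      fix f :: "real poly" assume "degree f \<le> degree g"
      then have "degree f = 0" using True by simp
      then have fc: "f = [:coeff f 0:]" by (rule sym[OF degree_0_id])
      have "Fract f g = C (coeff f 0 / coeff g 0)"
        by (subst fc, subst gc) (simp only: Fract_conv_to_fract C_divide)
      then show "Fract f g \<in> dress_min" using D_C by simp
    qed
  next
    case False
    then obtain \<mu> \<nu> s where nu: "\<nu> \<noteq> 0" and gq: "g = ([:- \<mu>, 1:]^2 + [:\<nu>^2:]) * s"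
      using real_quad_factor[OF less.prems] by blast
    note qf = q2_facts[OF nu, of \<mu>]
    have g0: "g \<noteq> 0" using less.prems by auto
    then have s0: "s \<noteq> 0" using gq by auto
    have "degree g = 2 + degree s" using gq degree_mult_eq[OF qf(1) s0] qf(2) by simp
    then have ds: "degree s < degree g" by simp
    have "\<forall>t. poly s t \<noteq> 0" using less.prems gq by auto
    then have "Pd s" using less.hyps ds by blast
    then show ?thesis using gq Pd_mult[OF qf(1) s0 Pd_quad[OF nu] ] by simp
  qed
qed




lemma key_ids:
  fixes t e d lx ly gm G :: "'a::field"
  assumes G: "G \<noteq> 0" and hG: "G = t^2 + 1" and d0: "d \<noteq> 0" and lx0: "lx \<noteq> 0" and ly0: "ly \<noteq> 0" and g0: "gm \<noteq> 0"
  defines "u \<equiv> lx / d * (t / G - e * (t^2 / G))"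
  defines "v \<equiv> 1 / d * (d * (1 / G) + (ly - d * e) * (t / G) - (ly * e) * (t^2 / G))"
  defines "F \<equiv> 1 / (d * lx) * (((d + ly * e) * ly) * (t^2 / G)
       + ((d + ly * e) * d + (d * e - ly) * ly) * (t / G) + ((d * e - ly) * d) * (1 / G))"
  defines "c \<equiv> lx / ly"
  defines "b \<equiv> ly * G / gm"
  shows "(b * c) * (1 - v) + b * u = (t + e) * t * lx / gm"
    "(b * c) * F + b * v = (t + e) * (ly * t + d) / gm"
    "(1 - v) * (1 - v) + F * u = 1 - v"
    "(1 - v) * F + F * v = F"
    "u * (1 - v) + v * u = u"
    "u * F + v * v = v"
proof -
  define W where "W = (d + ly * e) * t + (d * e - ly)"
  have uf: "u = lx * t * (1 - e * t) / (d * G)"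
    unfolding u_def using G d0 by (simp add: field_simps power2_eq_square)
  have vf: "v = (ly * t + d) * (1 - e * t) / (d * G)"
    unfolding v_def using G d0 by (simp add: field_simps power2_eq_square)
  have Ff: "F = W * (ly * t + d) / (d * lx * G)"
    unfolding F_def W_def using G d0 lx0 by (simp add: field_simps power2_eq_square)
  have num: "d * G - (ly * t + d) * (1 - e * t) = t * W"
    unfolding hG W_def by (simp add: algebra_simps power2_eq_square)
  have wf: "1 - v = t * W / (d * G)"
    unfolding vf using G d0 num by (simp add: field_simps)
  have Wr: "W + ly * (1 - e * t) = d * (t + e)"
    unfolding W_def by (simp add: algebra_simps)
  have "F * u = (t * W / (d * G)) * ((ly * t + d) * (1 - e * t) / (d * G))"
    unfolding Ff uf using G d0 lx0 by (simp add: field_simps)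
  also have "\<dots> = (1 - v) * v" by (simp only: wf[symmetric] vf[symmetric])
  finally have k1: "F * u = (1 - v) * v" .
  show "(1 - v) * (1 - v) + F * u = 1 - v"
    unfolding k1 by (simp add: algebra_simps)
  show "(1 - v) * F + F * v = F"
    by (simp add: algebra_simps)
  show "u * (1 - v) + v * u = u"
    by (simp add: algebra_simps)
  show "u * F + v * v = v"
    using k1 by (simp add: algebra_simps)
  have "c * (1 - v) + u = lx * t * (W + ly * (1 - e * t)) / (ly * d * G)"
    unfolding wf uf c_def using G d0 ly0 by (simp add: field_simps)
  also have "\<dots> = lx * t * (t + e) / (ly * G)" unfolding Wr using d0 by simp
  finally have s1: "c * (1 - v) + u = lx * t * (t + e) / (ly * G)" .
  show "(b * c) * (1 - v) + b * u = (t + e) * t * lx / gm"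
  proof -
    have "(b * c) * (1 - v) + b * u = b * (c * (1 - v) + u)" by (simp add: algebra_simps)
    also have "\<dots> = (t + e) * t * lx / gm" unfolding s1 b_def using G ly0 g0 by (simp add: field_simps)
    finally show ?thesis .
  qed
  have "c * F + v = (ly * t + d) * (W + ly * (1 - e * t)) / (ly * d * G)"
    unfolding Ff vf c_def using G d0 ly0 lx0 by (simp add: field_simps)
  also have "\<dots> = (ly * t + d) * (t + e) / (ly * G)" unfolding Wr using d0 by simp
  finally have s2: "c * F + v = (ly * t + d) * (t + e) / (ly * G)" .
  show "(b * c) * F + b * v = (t + e) * (ly * t + d) / gm"
  proof -
    have "(b * c) * F + b * v = b * (c * F + v)" by (simp add: algebra_simps)
    also have "\<dots> = (t + e) * (ly * t + d) / gm" unfolding s2 b_def using G ly0 g0 by (simp add: field_simps)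
    finally show ?thesis .
  qed
qed




lemma mat2_mult: "mat2 a b c d ** mat2 e f g h = mat2 (a*e+b*g) (a*f+b*h) (c*e+d*g) (c*f+d*h)"
  unfolding mat2_def matrix_matrix_mult_def by (simp add: vec_eq_iff sum_2 forall_2)

lemma mat2_one: "(mat 1 :: 'a::{zero,one} ^2^2) = mat2 1 0 0 1"
  unfolding mat2_def mat_def by (simp add: vec_eq_iff forall_2)

lemma mat2_over: "a \<in> S \<Longrightarrow> b \<in> S \<Longrightarrow> c \<in> S \<Longrightarrow> d \<in> S \<Longrightarrow> matrix_over S (mat2 a b c d)"
  unfolding matrix_over_def mat2_def by (simp add: forall_2)

lemma deg1_coeffs: "degree (f::real poly) \<le> 1 \<Longrightarrow> f = [:coeff f 0, coeff f 1:]"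
  by (rule poly_eqI) (auto simp: coeff_pCons coeff_eq_0 split: nat.split)

lemma to_fract_smult: "to_fract (smult k p) = C k * to_fract p"
proof -
  have h: "smult k p = [:k:] * p" by simp
  show ?thesis by (subst h) (rule to_fract_mult)
qed




lemma cases_xy:
  fixes x y :: "real poly"
  assumes dx: "degree x = 2" and dy: "degree y = 2" and dg: "degree (gcd x y) \<noteq> 0"
  shows "(\<exists>\<kappa>. \<kappa> \<noteq> 0 \<and> y = smult \<kappa> x) \<or>
         (\<exists>a b lx ly d. lx \<noteq> 0 \<and> ly \<noteq> 0 \<and> d \<noteq> 0 \<and> x = [:- a, 1:] * [:- b, 1:] * [:lx:]
             \<and> y = [:- a, 1:] * ([:ly:] * [:- b, 1:] + [:d:]))"
proof -
  define g where "g = gcd x y"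
  have x0: "x \<noteq> 0" using dx by auto
  have y0: "y \<noteq> 0" using dy by auto
  have gx: "g dvd x" and gy: "g dvd y" unfolding g_def by simp_all
  have g0: "g \<noteq> 0" unfolding g_def using x0 by simp
  have dgl: "degree g \<le> 2" using dvd_imp_degree_le[OF gx x0] dx by simp
  have dg': "degree g \<noteq> 0" using dg unfolding g_def .
  consider "degree g = 2" | "degree g = 1" using dgl dg' by linarith
  then show ?thesis
  proof cases
    case 1
    obtain k where xk: "x = g * k" using gx by (elim dvdE)
    obtain m where ym: "y = g * m" using gy by (elim dvdE)
    have k0: "k \<noteq> 0" using xk x0 by auto
    have m0: "m \<noteq> 0" using ym y0 by auto
    have "degree k = 0" using degree_mult_eq[OF g0 k0] xk dx 1 by simp
    then have kc: "k = [:coeff k 0:]" by (rule sym[OF degree_0_id])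
    have "degree m = 0" using degree_mult_eq[OF g0 m0] ym dy 1 by simp
    then have mc: "m = [:coeff m 0:]" by (rule sym[OF degree_0_id])
    have k00: "coeff k 0 \<noteq> 0" using k0 kc by (metis pCons_0_0)
    have m00: "coeff m 0 \<noteq> 0" using m0 mc by (metis pCons_0_0)
    have "y = smult (coeff m 0 / coeff k 0) x"
      using k00 by (subst ym, subst xk, subst mc, subst kc) simp
    then show ?thesis using k00 m00 by (intro disjI1 exI[of _ "coeff m 0 / coeff k 0"]) simp
  next
    case 2
    have gl: "g = [:coeff g 0, coeff g 1:]" using 2 by (intro deg1_coeffs) simp
    have g1: "coeff g 1 \<noteq> 0" using 2 g0 by (metis leading_coeff_neq_0)
    define a where "a = - coeff g 0 / coeff g 1"
    have "poly g a = 0" using g1 by (subst gl) (simp add: a_def field_simps)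
    have pa: "poly x a = 0" "poly y a = 0"
      using \<open>poly g a = 0\<close> gx gy by (auto elim!: dvdE)
    obtain x1 where x1: "x = [:- a, 1:] * x1" using pa(1) by (auto simp: poly_eq_0_iff_dvd elim!: dvdE)
    obtain y1 where y1: "y = [:- a, 1:] * y1" using pa(2) by (auto simp: poly_eq_0_iff_dvd elim!: dvdE)
    have x10: "x1 \<noteq> 0" using x1 x0 by auto
    have y10: "y1 \<noteq> 0" using y1 y0 by auto
    have dx1: "degree x1 = 1" using degree_mult_eq[of "[:- a, 1:]" x1] x10 x1 dx by simp
    have dy1: "degree y1 = 1" using degree_mult_eq[of "[:- a, 1:]" y1] y10 y1 dy by simp
    define lx where "lx = coeff x1 1"
    define ly where "ly = coeff y1 1"
    have lx0: "lx \<noteq> 0" unfolding lx_def using dx1 x10 by (metis leading_coeff_neq_0)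
    have ly0: "ly \<noteq> 0" unfolding ly_def using dy1 y10 by (metis leading_coeff_neq_0)
    define b where "b = - coeff x1 0 / lx"
    define d where "d = coeff y1 0 + ly * b"
    have x1e: "x1 = [:- b, 1:] * [:lx:]"
      using deg1_coeffs[of x1] dx1 lx0 unfolding lx_def b_def by (simp add: field_simps)
    have y1e: "y1 = [:ly:] * [:- b, 1:] + [:d:]"
      using deg1_coeffs[of y1] dy1 unfolding ly_def d_def by simp
    show ?thesis
    proof (cases "d = 0")
      case False
      have "lx \<noteq> 0 \<and> ly \<noteq> 0 \<and> d \<noteq> 0 \<and> x = [:- a, 1:] * [:- b, 1:] * [:lx:]
             \<and> y = [:- a, 1:] * ([:ly:] * [:- b, 1:] + [:d:])"
        using False lx0 ly0 by (simp only: x1 y1 x1e y1e mult.assoc simp_thms not_False_eq_True)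
      then show ?thesis by blast
    next
      case True
      have "y = smult (ly / lx) x"
        using lx0 True by (subst y1, subst x1, subst x1e, subst y1e) (simp add: algebra_simps)
      then show ?thesis using lx0 ly0 by (intro disjI1 exI[of _ "ly / lx"]) simp
    qed
  qed
qed




lemma idem_mat2_row: "idempotent_mat (mat2 1 b 0 0)"
  unfolding idempotent_mat_def mat2_mult by simp
lemma idem_mat2_col: "idempotent_mat (mat2 0 0 c 1)"
  unfolding idempotent_mat_def mat2_mult by simp

theorem proposition3p5:
  fixes x y \<gamma> :: "real poly"
  assumes "degree x = 2" and "degree y = 2"
    and "\<forall>t::real. poly \<gamma> t \<noteq> 0"
    and "Fract x \<gamma> \<in> dress_min" and "Fract y \<gamma> \<in> dress_min"
    and "degree (gcd x y) \<noteq> 0"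
  shows "product_of_idempotents_over dress_min (mat2 (Fract x \<gamma>) (Fract y \<gamma>) 0 0)"
proof -
  have g0: "\<gamma> \<noteq> 0" using assms(3) by auto
  have dg: "2 \<le> degree \<gamma>" using D_degree[OF assms(4) g0] assms(1) by simp
  have HH: "\<And>f. degree f \<le> degree \<gamma> \<Longrightarrow> Fract f \<gamma> \<in> dress_min"
    using H_lemma[OF assms(3)] unfolding Pd_def by blast
  from cases_xy[OF assms(1,2,6)] show ?thesis
  proof (elim disjE exE conjE)
    fix \<kappa> assume k0: "\<kappa> \<noteq> 0" and yk: "y = smult \<kappa> x"
    define p where "p = Fract x \<gamma>"
    have q: "Fract y \<gamma> = C \<kappa> * p" unfolding yk p_def
      by (simp only: Fract_conv_to_fract to_fract_smult times_divide_eq_right)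
    define E1 where "E1 = mat2 1 (C \<kappa> * p) 0 (0::real poly fract)"
    define E2 where "E2 = mat2 0 0 (C (1/\<kappa>)) (1::real poly fract)"
    have pD: "p \<in> dress_min" using assms(4) unfolding p_def .
    have "E1 ** E2 = mat2 (C \<kappa> * p * C (1/\<kappa>)) (C \<kappa> * p) 0 0"
      unfolding E1_def E2_def mat2_mult by simp
    also have "C \<kappa> * p * C (1/\<kappa>) = p" using k0 by (simp add: C_simps field_simps)
    finally have prod: "E1 ** E2 = mat2 p (Fract y \<gamma>) 0 0" using q by simp
    show ?thesis unfolding product_of_idempotents_over_def
    proof (rule exI[of _ "[E1, E2]"], intro conjI)
      show "[E1, E2] \<noteq> []" by simp
      show "\<forall>E\<in>set [E1, E2]. matrix_over dress_min E \<and> idempotent_mat E"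
        unfolding E1_def E2_def using pD
        by (auto intro!: mat2_over D_0 D_1 D_C D_Cmult idem_mat2_row idem_mat2_col)
      show "mat2 (Fract x \<gamma>) (Fract y \<gamma>) 0 0 = foldr (**) [E1, E2] (mat 1)"
        using prod unfolding p_def by (simp add: matrix_mul_rid)
    qed
  next
    fix a b lx ly d
    assume lx0: "lx \<noteq> 0" and ly0: "ly \<noteq> 0" and d0: "d \<noteq> 0"
      and xe: "x = [:- a, 1:] * [:- b, 1:] * [:lx:]"
      and ye: "y = [:- a, 1:] * ([:ly:] * [:- b, 1:] + [:d:])"
    define T where "T = Xf - C b"
    define G where "G = T^2 + C 1 ^ 2"
    define Gm where "Gm = to_fract \<gamma>"
    have Gm0: "Gm \<noteq> 0" unfolding Gm_def using g0 by simp
    have B: "G \<noteq> 0" "1 / G \<in> dress_min" "T / G \<in> dress_min" "T^2 / G \<in> dress_min"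
      using quad_basis[of 1 b] unfolding T_def G_def by auto
    have hG: "G = T^2 + 1" unfolding G_def by (simp add: C_1)
    note qf = q2_facts[of 1 b]
    define u where "u = C lx / C d * (T / G - (C b - C a) * (T^2 / G))"
    define v where "v = 1 / C d * (C d * (1 / G) + (C ly - C d * (C b - C a)) * (T / G)
                       - (C ly * (C b - C a)) * (T^2 / G))"
    define F where "F = 1 / (C d * C lx) * (((C d + C ly * (C b - C a)) * C ly) * (T^2 / G)
       + ((C d + C ly * (C b - C a)) * C d + (C d * (C b - C a) - C ly) * C ly) * (T / G)
       + ((C d * (C b - C a) - C ly) * C d) * (1 / G))"
    define c where "c = C lx / C ly"
    define \<beta> where "\<beta> = C ly * G / Gm"
    note ids = key_ids[where t=T and e="C b - C a" and d="C d" and lx="C lx" and ly="C ly"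
        and gm=Gm and G=G, OF B(1) hG _ _ _ Gm0, folded u_def v_def F_def c_def \<beta>_def]
    have C0: "C d \<noteq> 0" "C lx \<noteq> 0" "C ly \<noteq> 0" using d0 lx0 ly0 by simp_all
    note ids = ids[OF C0]
    \<comment> \<open>membership\<close>
    have uD: "u \<in> dress_min"
    proof -
      have "u = C (lx / d) * (T / G - C (b - a) * (T^2 / G))" unfolding u_def by (simp only: C_simps)
      then show ?thesis using B by (simp only:) (intro D_Cmult D_diff)
    qed
    have vD: "v \<in> dress_min"
    proof -
      have "v = C (1 / d) * (C d * (1 / G) + C (ly - d * (b - a)) * (T / G) - C (ly * (b - a)) * (T^2 / G))"
        unfolding v_def by (simp only: C_simps)
      then show ?thesis using B by (simp only:) (intro D_Cmult D_diff dress_min.add)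
    qed
    have FD: "F \<in> dress_min"
    proof -
      have "F = C (1 / (d * lx)) * (C ((d + ly * (b - a)) * ly) * (T^2 / G)
       + C ((d + ly * (b - a)) * d + (d * (b - a) - ly) * ly) * (T / G)
       + C ((d * (b - a) - ly) * d) * (1 / G))"
        unfolding F_def by (simp only: C_simps)
      then show ?thesis using B by (simp only:) (intro D_Cmult dress_min.add)
    qed
    have cD: "c \<in> dress_min" unfolding c_def using D_C[of "lx / ly"] by (simp only: C_simps)
    have \<beta>D: "\<beta> \<in> dress_min"
    proof -
      have "degree ([:ly:] * ([:- b, 1:]^2 + [:1^2:])) = 2"
        using qf(2) ly0 by (subst degree_mult_eq) (use qf(1) in auto)
      then have "Fract ([:ly:] * ([:- b, 1:]^2 + [:1^2:])) \<gamma> \<in> dress_min" using dg by (intro HH) simp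
      moreover have "Fract ([:ly:] * ([:- b, 1:]^2 + [:1^2:])) \<gamma> = \<beta>"
        unfolding \<beta>_def Gm_def G_def T_def
        by (simp only: Fract_conv_to_fract to_fract_mult qf(3))
      ultimately show ?thesis by simp
    qed
    have wD: "1 - v \<in> dress_min" using D_diff[OF D_1 vD] .
    \<comment> \<open>the target entries\<close>
    have px: "Fract x \<gamma> = (T + (C b - C a)) * T * C lx / Gm"
    proof -
      have "to_fract x = (Xf - C a) * (Xf - C b) * C lx" unfolding xe
        by (simp only: to_fract_mult to_fract_lin)
      also have "Xf - C a = T + (C b - C a)" unfolding T_def by simp
      finally show ?thesis unfolding Gm_def T_def by (simp add: Fract_conv_to_fract)
    qed
    have qy: "Fract y \<gamma> = (T + (C b - C a)) * (C ly * T + C d) / Gm"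
    proof -
      have "to_fract y = (Xf - C a) * (C ly * (Xf - C b) + C d)" unfolding ye
        by (simp only: to_fract_mult to_fract_lin to_fract_add)
      also have "Xf - C a = T + (C b - C a)" unfolding T_def by simp
      finally show ?thesis unfolding Gm_def T_def by (simp add: Fract_conv_to_fract)
    qed
    define E1 where "E1 = mat2 1 \<beta> 0 0"
    define E2 where "E2 = mat2 0 0 c 1"
    define E3 where "E3 = mat2 (1 - v) F u v"
    have E12: "E1 ** E2 = mat2 (\<beta> * c) \<beta> 0 0" unfolding E1_def E2_def mat2_mult by simp
    have prod: "(E1 ** E2) ** E3 = mat2 (Fract x \<gamma>) (Fract y \<gamma>) 0 0"
      unfolding E12 E3_def mat2_mult px qy using ids(1,2) by simp
    have idem3: "idempotent_mat E3"
      unfolding idempotent_mat_def E3_def mat2_mult using ids(3-6) by simp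
    show ?thesis unfolding product_of_idempotents_over_def
    proof (rule exI[of _ "[E1, E2, E3]"], intro conjI)
      show "[E1, E2, E3] \<noteq> []" by simp
      show "\<forall>E\<in>set [E1, E2, E3]. matrix_over dress_min E \<and> idempotent_mat E"
        unfolding E1_def E2_def using idem3 unfolding E3_def
        by (auto intro!: mat2_over D_0 D_1 idem_mat2_row idem_mat2_col uD vD FD cD \<beta>D wD)
      show "mat2 (Fract x \<gamma>) (Fract y \<gamma>) 0 0 = foldr (**) [E1, E2, E3] (mat 1)"
        using prod by (simp add: matrix_mul_rid matrix_mul_assoc)
    qed
  qed
qed


end
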